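(* Each of the varieties $\mathsf{PSB}$, $\mathsf{PsC}$, $\mathsf{SIA}$ and $\mathsf{S^2IA}$ is closed under canonical extensions: if a conditional algebra $\langle A,\to\rangle$ belongs to one of them, then $\langle\mathcal{P}(\mathrm{Ul}(A)),\to_{T_A}\rangle$ belongs to the same variety.
   Context: A conditional algebra is $\langle A,\to\rangle$ with $A$ a Boolean algebra and $\to$ binary satisfying (C1) $a\to1=1$, (C2) $(a\to b)\wedge(a\to c)=a\to(b\wedge c)$, (C3) $(a\vee b)\to c\le(a\to c)\wedge(b\to c)$. Further equations: (C1* ) $0\to a=1$; (C3* ) $(a\to c)\wedge(b\to c)\le(a\vee b)\to c$; (C4) $a\to b\le c\to(a\to b)$; (C5) $a\wedge(a\to b)\le b$; (C6) $a\to b\le\neg b\to\neg a$; (C7) $\neg(a\to b)\le c\to\neg(a\to b)$; (C8) $(1\to(\neg a\vee b))\wedge(b\to c)\le a\to c$. $\mathsf{PSB}$ = conditional algebras satisfying C1*, C3*; $\mathsf{PsC}$ = $\mathsf{PSB}$ + C5, C6; $\mathsf{SIA}$ = $\mathsf{PSB}$ + C4, C5, C7, C8; $\mathsf{S^2IA}$ = $\mathsf{PSB}$ + C4, C5, C6, C7. Filters include the improper filter $A$; $\varphi(F)=\{u\in\mathrm{Ul}(A):F\subseteq u\}$; $D^{\to}_u(F)=\{b:\exists a\in F,\ a\to b\in u\}$; $T_A(u,Z,v)$ iff there is a filter $F$ with $Z=\varphi(F)$ and $D^{\to}_u(F)\subseteq v$; $T_A(u,Z)=\{v:T_A(u,Z,v)\}$;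 $U\to_{T_A}V=\{u:\forall Z\subseteq U,\ T_A(u,Z)\subseteq V\}$. *)

theory Defs
  imports Main
begin

text \<open>A Boolean algebra presented explicitly (carrier and operations), so that both
  an abstract Boolean algebra (a type of class boolean_algebra) and the powerset
  algebra of the set of ultrafilters can be treated uniformly.\<close>

record 'a BA =
  bcarr :: "'a set"
  bmeet :: "'a \<Rightarrow> 'a \<Rightarrow> 'a"
  bjoin :: "'a \<Rightarrow> 'a \<Rightarrow> 'a"
  bneg  :: "'a \<Rightarrow> 'a"
  bzero :: "'a"
  bone  :: "'a"

definition ble :: "'a BA \<Rightarrow> 'a \<Rightarrow> 'a \<Rightarrow> bool" where
  "ble B a b \<longleftrightarrow> bmeet B a b = a"

definition type_BA :: "('a::boolean_algebra) BA" where
  "type_BA = \<lparr>bcarr = UNIV, bmeet = inf, bjoin = sup, bneg = uminus, bzero = bot, bone = top\<rparr>"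

definition pow_BA :: "'b set \<Rightarrow> 'b set BA" where
  "pow_BA U = \<lparr>bcarr = Pow U, bmeet = (\<inter>), bjoin = (\<union>), bneg = (\<lambda>X. U - X),
                bzero = {}, bone = U\<rparr>"

definition cond_alg :: "'a BA \<Rightarrow> ('a \<Rightarrow> 'a \<Rightarrow> 'a) \<Rightarrow> bool" where
  "cond_alg B imp \<longleftrightarrow>
     (\<forall>a\<in>bcarr B. \<forall>b\<in>bcarr B. imp a b \<in> bcarr B) \<and>
     (\<forall>a\<in>bcarr B. imp a (bone B) = bone B) \<and>
     (\<forall>a\<in>bcarr B. \<forall>b\<in>bcarr B. \<forall>c\<in>bcarr B.
        bmeet B (imp a b) (imp a c) = imp a (bmeet B b c)) \<and>
     (\<forall>a\<in>bcarr B. \<forall>b\<in>bcarr B. \<forall>c\<in>bcarr B.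
        ble B (imp (bjoin B a b) c) (bmeet B (imp a c) (imp b c)))"

definition C1s :: "'a BA \<Rightarrow> ('a \<Rightarrow> 'a \<Rightarrow> 'a) \<Rightarrow> bool" where
  "C1s B imp \<longleftrightarrow> (\<forall>a\<in>bcarr B. imp (bzero B) a = bone B)"

definition C3s :: "'a BA \<Rightarrow> ('a \<Rightarrow> 'a \<Rightarrow> 'a) \<Rightarrow> bool" where
  "C3s B imp \<longleftrightarrow> (\<forall>a\<in>bcarr B. \<forall>b\<in>bcarr B. \<forall>c\<in>bcarr B.
      ble B (bmeet B (imp a c) (imp b c)) (imp (bjoin B a b) c))"

definition C4 :: "'a BA \<Rightarrow> ('a \<Rightarrow> 'a \<Rightarrow> 'a) \<Rightarrow> bool" where
  "C4 B imp \<longleftrightarrow> (\<forall>a\<in>bcarr B. \<forall>b\<in>bcarr B. \<forall>c\<in>bcarr B.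
      ble B (imp a b) (imp c (imp a b)))"

definition C5 :: "'a BA \<Rightarrow> ('a \<Rightarrow> 'a \<Rightarrow> 'a) \<Rightarrow> bool" where
  "C5 B imp \<longleftrightarrow> (\<forall>a\<in>bcarr B. \<forall>b\<in>bcarr B. ble B (bmeet B a (imp a b)) b)"

definition C6 :: "'a BA \<Rightarrow> ('a \<Rightarrow> 'a \<Rightarrow> 'a) \<Rightarrow> bool" where
  "C6 B imp \<longleftrightarrow> (\<forall>a\<in>bcarr B. \<forall>b\<in>bcarr B.
      ble B (imp a b) (imp (bneg B b) (bneg B a)))"

definition C7 :: "'a BA \<Rightarrow> ('a \<Rightarrow> 'a \<Rightarrow> 'a) \<Rightarrow> bool" where
  "C7 B imp \<longleftrightarrow> (\<forall>a\<in>bcarr B. \<forall>b\<in>bcarr B. \<forall>c\<in>bcarr B.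
      ble B (bneg B (imp a b)) (imp c (bneg B (imp a b))))"

definition C8 :: "'a BA \<Rightarrow> ('a \<Rightarrow> 'a \<Rightarrow> 'a) \<Rightarrow> bool" where
  "C8 B imp \<longleftrightarrow> (\<forall>a\<in>bcarr B. \<forall>b\<in>bcarr B. \<forall>c\<in>bcarr B.
      ble B (bmeet B (imp (bone B) (bjoin B (bneg B a) b)) (imp b c)) (imp a c))"

definition PSB :: "'a BA \<Rightarrow> ('a \<Rightarrow> 'a \<Rightarrow> 'a) \<Rightarrow> bool" where
  "PSB B imp \<longleftrightarrow> cond_alg B imp \<and> C1s B imp \<and> C3s B imp"

definition PsC :: "'a BA \<Rightarrow> ('a \<Rightarrow> 'a \<Rightarrow> 'a) \<Rightarrow> bool" where
  "PsC B imp \<longleftrightarrow> PSB B imp \<and> C5 B imp \<and> C6 B imp"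

definition SIA :: "'a BA \<Rightarrow> ('a \<Rightarrow> 'a \<Rightarrow> 'a) \<Rightarrow> bool" where
  "SIA B imp \<longleftrightarrow> PSB B imp \<and> C4 B imp \<and> C5 B imp \<and> C7 B imp \<and> C8 B imp"

definition S2IA :: "'a BA \<Rightarrow> ('a \<Rightarrow> 'a \<Rightarrow> 'a) \<Rightarrow> bool" where
  "S2IA B imp \<longleftrightarrow> PSB B imp \<and> C4 B imp \<and> C5 B imp \<and> C6 B imp \<and> C7 B imp"

text \<open>Filters (the improper filter UNIV included) and ultrafilters of a Boolean algebra type.\<close>
definition is_filter :: "('a::boolean_algebra) set \<Rightarrow> bool" where
  "is_filter F \<longleftrightarrow> top \<in> F \<and> (\<forall>a\<in>F. \<forall>b. a \<le> b \<longrightarrow> b \<in> F) \<and>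
                   (\<forall>a\<in>F. \<forall>b\<in>F. inf a b \<in> F)"

definition is_ultrafilter :: "('a::boolean_algebra) set \<Rightarrow> bool" where
  "is_ultrafilter u \<longleftrightarrow> is_filter u \<and> u \<noteq> UNIV \<and>
     (\<forall>G. is_filter G \<and> u \<subseteq> G \<and> G \<noteq> UNIV \<longrightarrow> G = u)"

definition Ul :: "('a::boolean_algebra) set set" where
  "Ul = {u. is_ultrafilter u}"

definition phi :: "('a::boolean_algebra) set \<Rightarrow> 'a set set" where
  "phi F = {u \<in> Ul. F \<subseteq> u}"

definition Dimp :: "('a::boolean_algebra \<Rightarrow> 'a \<Rightarrow> 'a) \<Rightarrow> 'a set \<Rightarrow> 'a set \<Rightarrow> 'a set" where
  "Dimp imp u F = {b. \<exists>a\<in>F. imp a b \<in> u}"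

definition TA :: "('a::boolean_algebra \<Rightarrow> 'a \<Rightarrow> 'a) \<Rightarrow> 'a set \<Rightarrow> 'a set set \<Rightarrow> 'a set \<Rightarrow> bool" where
  "TA imp u Z v \<longleftrightarrow> (\<exists>F. is_filter F \<and> Z = phi F \<and> Dimp imp u F \<subseteq> v)"

definition TA_set :: "('a::boolean_algebra \<Rightarrow> 'a \<Rightarrow> 'a) \<Rightarrow> 'a set \<Rightarrow> 'a set set \<Rightarrow> 'a set set" where
  "TA_set imp u Z = {v \<in> Ul. TA imp u Z v}"

definition imp_T :: "('a::boolean_algebra \<Rightarrow> 'a \<Rightarrow> 'a) \<Rightarrow> 'a set set \<Rightarrow> 'a set set \<Rightarrow> 'a set set" where
  "imp_T imp U V = {u \<in> Ul. \<forall>Z. Z \<subseteq> U \<longrightarrow> TA_set imp u Z \<subseteq> V}"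

end

theory Submission
  imports Defs
begin

lemma filter_top: "is_filter F \<Longrightarrow> top \<in> F" by (simp add: is_filter_def)
lemma filter_up: "is_filter F \<Longrightarrow> a \<in> F \<Longrightarrow> a \<le> b \<Longrightarrow> b \<in> F" by (auto simp add: is_filter_def)
lemma filter_inf: "is_filter F \<Longrightarrow> a \<in> F \<Longrightarrow> b \<in> F \<Longrightarrow> inf a b \<in> F" by (auto simp add: is_filter_def)

lemma filter_bot: "is_filter F \<Longrightarrow> bot \<in> F \<Longrightarrow> F = UNIV"
  using filter_up by fastforce

definition gen :: "('a::boolean_algebra) set \<Rightarrow> 'a set \<Rightarrow> 'a set" where
  "gen F G = {x. \<exists>a\<in>F. \<exists>b\<in>G. inf a b \<le> x}"

lemma gen_filter:
  assumes "is_filter F" "is_filter G" shows "is_filter (gen F G)"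
  unfolding is_filter_def
proof (intro conjI ballI allI impI)
  show "top \<in> gen F G" using assms by (auto simp: gen_def intro!: bexI[of _ top] filter_top)
next
  fix a b assume "a \<in> gen F G" "a \<le> b" then show "b \<in> gen F G"
    unfolding gen_def by (auto intro: order_trans)
next
  fix x y assume "x \<in> gen F G" "y \<in> gen F G"
  then obtain a b a' b' where "a \<in> F" "b \<in> G" "inf a b \<le> x" "a' \<in> F" "b' \<in> G" "inf a' b' \<le> y"
    unfolding gen_def by auto
  moreover have "inf (inf a a') (inf b b') \<le> inf x y" using calculation
    by (metis inf.coboundedI1 inf.coboundedI2 inf_mono inf_assoc inf_commute inf_left_commute le_inf_iff)
  ultimately show "inf x y \<in> gen F G" unfolding gen_def
    using assms filter_inf by blast
qed

lemma gen_sub1: "is_filter G \<Longrightarrow> F \<subseteq> gen F G"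
proof
  fix x assume "is_filter G" "x \<in> F"
  then have "top \<in> G" "inf x top \<le> x" using filter_top by auto
  then show "x \<in> gen F G" using \<open>x \<in> F\<close> unfolding gen_def by blast
qed
lemma gen_sub2: "is_filter F \<Longrightarrow> G \<subseteq> gen F G"
proof
  fix x assume "is_filter F" "x \<in> G"
  then have "top \<in> F" "inf top x \<le> x" using filter_top by auto
  then show "x \<in> gen F G" using \<open>x \<in> G\<close> unfolding gen_def by blast
qed

lemma up_filter: "is_filter {x. a \<le> x}"
  unfolding is_filter_def by auto

lemma top_filter: "is_filter {top::'a::boolean_algebra}"
  unfolding is_filter_def by (auto simp: top_unique)

lemma ext_ultra:
  fixes F I :: "('a::boolean_algebra) set"
  assumes F: "is_filter F" and I0: "bot \<in> I" and Idown: "\<And>a b. a \<in> I \<Longrightarrow> b \<le> a \<Longrightarrow> b \<in> I"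
    and Isup: "\<And>a b. a \<in> I \<Longrightarrow> b \<in> I \<Longrightarrow> sup a b \<in> I" and disj: "F \<inter> I = {}"
  shows "\<exists>w\<in>Ul. F \<subseteq> w \<and> w \<inter> I = {}"
proof -
  define S where "S = {G. is_filter G \<and> F \<subseteq> G \<and> G \<inter> I = {}}"
  have SD: "is_filter X" "F \<subseteq> X" "X \<inter> I = {}" if "X \<in> S" for X using that by (simp_all add: S_def)
  have SI: "X \<in> S" if "is_filter X" "F \<subseteq> X" "X \<inter> I = {}" for X using that by (simp add: S_def)
  have "\<exists>M\<in>S. \<forall>X\<in>S. M \<subseteq> X \<longrightarrow> X = M"
  proof (rule subset_Zorn_nonempty)
    have "F \<in> S" using SI[OF F _ disj] by simp
    then show "S \<noteq> {}" by blast
  next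
    fix C assume C: "C \<noteq> {}" "subset.chain S C"
    then have CS: "C \<subseteq> S" and ch: "\<forall>X\<in>C. \<forall>Y\<in>C. X \<subseteq> Y \<or> Y \<subseteq> X" by (auto simp: subset_chain_def)
    obtain G0 where G0: "G0 \<in> C" using C by auto
    have "is_filter (\<Union>C)" unfolding is_filter_def
    proof (intro conjI ballI allI impI)
      have "top \<in> G0" using filter_top[OF SD(1)] G0 CS by blast
      then show "top \<in> \<Union>C" using G0 by blast
    next
      fix a b assume "a \<in> \<Union>C" "a \<le> b"
      then obtain X where "X \<in> C" "a \<in> X" by blast
      then have "b \<in> X" using filter_up[OF SD(1)] CS \<open>a \<le> b\<close> by blast
      then show "b \<in> \<Union>C" using \<open>X \<in> C\<close> by blast
    next
      fix a b assume "a \<in> \<Union>C" "b \<in> \<Union>C"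
      then obtain X Y where XY: "X \<in> C" "Y \<in> C" "a \<in> X" "b \<in> Y" by auto
      show "inf a b \<in> \<Union>C"
      proof (cases "X \<subseteq> Y")
        case True then have "inf a b \<in> Y" using filter_inf[OF SD(1)] XY CS by blast
        then show ?thesis using XY by blast
      next
        case False then have "Y \<subseteq> X" using ch XY by blast
        then have "inf a b \<in> X" using filter_inf[OF SD(1)] XY CS by blast
        then show ?thesis using XY by blast
      qed
    qed
    moreover have "F \<subseteq> \<Union>C" using SD(2) G0 CS by blast
    moreover have "\<Union>C \<inter> I = {}" using SD(3) CS by blast
    ultimately show "\<Union>C \<in> S" by (rule SI)
  qed
  then obtain M where M: "M \<in> S" and Mmax: "\<And>X. X \<in> S \<Longrightarrow> M \<subseteq> X \<Longrightarrow> X = M" by blast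
  have Mf: "is_filter M" and FM: "F \<subseteq> M" and MI: "M \<inter> I = {}" using SD[OF M] by auto
  have prime: "a \<in> M \<or> -a \<in> M" for a
  proof (rule ccontr)
    assume na: "\<not> (a \<in> M \<or> -a \<in> M)"
    have "\<exists>m\<in>M. inf m c \<in> I" if "c \<notin> M" for c
    proof -
      let ?X = "gen M {x. c \<le> x}"
      have Xf: "is_filter ?X" using gen_filter Mf up_filter by blast
      have "M \<subseteq> ?X" using gen_sub1 up_filter by blast
      moreover have "c \<in> ?X" using gen_sub2[OF Mf, of "{x. c \<le> x}"] by auto
      ultimately have "?X \<notin> S" using Mmax that by blast
      then have "?X \<inter> I \<noteq> {}" using SI[OF Xf] FM \<open>M \<subseteq> ?X\<close> by blast
      then obtain x m y where "m \<in> M" "c \<le> y" "inf m y \<le> x" "x \<in> I" unfolding gen_def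
        by blast
      moreover then have "inf m c \<le> x" by (meson inf_mono order_refl order_trans)
      ultimately show ?thesis using Idown by blast
    qed
    then obtain m m' where m: "m \<in> M" "inf m a \<in> I" and m': "m' \<in> M" "inf m' (-a) \<in> I"
      using na by blast
    have "sup (inf m a) (inf m' (-a)) \<in> I" using m m' Isup by blast
    moreover have "inf m m' \<le> sup (inf m a) (inf m' (-a))"
    proof -
      have "inf m m' = sup (inf (inf m m') a) (inf (inf m m') (-a))"
        by (simp add: inf_sup_distrib1[symmetric])
      also have "\<dots> \<le> sup (inf m a) (inf m' (-a))"
      proof (rule sup_mono)
        show "inf (inf m m') a \<le> inf m a" by (rule inf_mono) simp_all
        show "inf (inf m m') (-a) \<le> inf m' (-a)" by (rule inf_mono) simp_all
      qed
      finally show ?thesis .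
    qed
    ultimately have "inf m m' \<in> I" using Idown by blast
    moreover have "inf m m' \<in> M" using m m' Mf filter_inf by blast
    ultimately show False using MI by blast
  qed
  have "M \<noteq> UNIV" using MI I0 by auto
  moreover have "G = M" if hG: "is_filter G" "M \<subseteq> G" "G \<noteq> UNIV" for G
  proof (rule ccontr)
    assume "G \<noteq> M" then obtain x where "x \<in> G" "x \<notin> M" using hG(2) by blast
    then have "-x \<in> G" using prime hG(2) by blast
    then have "inf x (-x) \<in> G" using \<open>x \<in> G\<close> filter_inf[OF hG(1)] by blast
    then have "bot \<in> G" by simp
    then have "G = UNIV" by (rule filter_bot[OF hG(1)])
    then show False using hG(3) by contradiction
  qed
  ultimately have "M \<in> Ul" using Mf unfolding Ul_def is_ultrafilter_def by blast
  then show ?thesis using FM MI by blast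
qed

lemma ext_ultra_proper:
  assumes "is_filter F" "F \<noteq> UNIV" shows "\<exists>w\<in>Ul. F \<subseteq> w"
proof -
  have "bot \<notin> F"
  proof
    assume "bot \<in> F" then have "F = UNIV" by (rule filter_bot[OF assms(1)])
    then show False using assms(2) by contradiction
  qed
  have "\<exists>w\<in>Ul. F \<subseteq> w \<and> w \<inter> {bot} = {}"
  proof (rule ext_ultra[OF assms(1)])
    show "bot \<in> {bot}" by simp
    show "b \<in> {bot}" if "a \<in> {bot}" "b \<le> a" for a b :: 'a using that by (simp add: bot_unique)
    show "sup a b \<in> {bot}" if "a \<in> {bot}" "b \<in> {bot}" for a b :: 'a using that by simp
    show "F \<inter> {bot} = {}" using \<open>bot \<notin> F\<close> by blast
  qed
  then show ?thesis by blast
qed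

lemma ultra_filter: "u \<in> Ul \<Longrightarrow> is_filter u" by (simp add: Ul_def is_ultrafilter_def)

lemma ultra_bot: "u \<in> Ul \<Longrightarrow> bot \<notin> u"
proof
  assume u: "u \<in> Ul" and b: "bot \<in> u"
  then have "u = UNIV" using filter_bot[OF ultra_filter[OF u] b] by blast
  moreover have "u \<noteq> UNIV" using u by (simp add: Ul_def is_ultrafilter_def)
  ultimately show False by blast
qed

lemma ultra_prime:
  assumes u: "u \<in> Ul" shows "a \<in> u \<or> -a \<in> u"
proof (rule ccontr)
  assume na: "\<not> (a \<in> u \<or> -a \<in> u)"
  let ?X = "gen u {x. a \<le> x}"
  have uf: "is_filter u" using u ultra_filter by blast
  have Xf: "is_filter ?X" using gen_filter uf up_filter by blast
  have "u \<subseteq> ?X" using gen_sub1 up_filter by blast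
  moreover have "a \<in> ?X" using gen_sub2[OF uf, of "{x. a \<le> x}"] by auto
  ultimately have uX: "u \<subseteq> ?X" "?X \<noteq> u" using na by blast+
  have max: "\<forall>G. is_filter G \<and> u \<subseteq> G \<and> G \<noteq> UNIV \<longrightarrow> G = u"
    using u by (simp add: Ul_def is_ultrafilter_def)
  have "?X = UNIV"
  proof (rule ccontr)
    assume "?X \<noteq> UNIV"
    then have "?X = u" using max Xf uX(1) by blast
    then show False using uX(2) by contradiction
  qed
  then have "bot \<in> ?X" by simp
  then obtain m b where "m \<in> u" "a \<le> b" "inf m b \<le> bot" unfolding gen_def by blast
  then have "inf m a \<le> bot" by (meson inf_mono order_refl order_trans)
  then have "inf m a = bot" by (simp add: bot_unique)
  then have "m \<le> -a" by (simp add: inf_shunt)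
  then show False using na \<open>m \<in> u\<close> filter_up uf by blast
qed

lemma ultra_inf: "u \<in> Ul \<Longrightarrow> (inf a b \<in> u) = (a \<in> u \<and> b \<in> u)"
proof -
  assume u: "u \<in> Ul"
  have f: "is_filter u" using ultra_filter[OF u] .
  show ?thesis
  proof
    assume h: "inf a b \<in> u"
    have "a \<in> u" by (rule filter_up[OF f h]) simp
    moreover have "b \<in> u" by (rule filter_up[OF f h]) simp
    ultimately show "a \<in> u \<and> b \<in> u" ..
  next
    assume "a \<in> u \<and> b \<in> u" then show "inf a b \<in> u" using filter_inf[OF f] by blast
  qed
qed

lemma ultra_compl: "u \<in> Ul \<Longrightarrow> (-a \<in> u) = (a \<notin> u)"
proof -
  assume u: "u \<in> Ul"
  have "\<not> (a \<in> u \<and> -a \<in> u)"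
  proof
    assume "a \<in> u \<and> -a \<in> u"
    then have "inf a (-a) \<in> u" using ultra_inf[OF u] by blast
    then have "bot \<in> u" by simp
    then show False using ultra_bot[OF u] by contradiction
  qed
  then show ?thesis using ultra_prime[OF u, of a] by blast
qed

lemma ultra_sup: "u \<in> Ul \<Longrightarrow> (sup a b \<in> u) = (a \<in> u \<or> b \<in> u)"
proof -
  assume u: "u \<in> Ul"
  have f: "is_filter u" using ultra_filter[OF u] .
  show ?thesis
  proof
    assume s: "sup a b \<in> u"
    show "a \<in> u \<or> b \<in> u"
    proof (rule ccontr)
      assume n: "\<not> (a \<in> u \<or> b \<in> u)"
      have "-a \<in> u" using n ultra_compl[OF u, of a] by blast
      moreover have "-b \<in> u" using n ultra_compl[OF u, of b] by blast
      ultimately have "inf (-a) (-b) \<in> u" using filter_inf[OF f] by blast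
      then have "- sup a b \<in> u" by simp
      then show False using s ultra_compl[OF u, of "sup a b"] by blast
    qed
  next
    assume "a \<in> u \<or> b \<in> u"
    then show "sup a b \<in> u"
    proof
      assume "a \<in> u" then show ?thesis by (rule filter_up[OF f]) simp
    next
      assume "b \<in> u" then show ?thesis by (rule filter_up[OF f]) simp
    qed
  qed
qed

lemma ultra_up: "u \<in> Ul \<Longrightarrow> a \<in> u \<Longrightarrow> a \<le> b \<Longrightarrow> b \<in> u"
  using filter_up ultra_filter by blast

lemma ultra_top: "u \<in> Ul \<Longrightarrow> top \<in> u"
  using filter_top ultra_filter by blast

lemma phi_single: "w \<in> Ul \<Longrightarrow> phi w = {w}"
proof -
  assume w: "w \<in> Ul"
  have "x = w" if "x \<in> Ul" "w \<subseteq> x" for x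
    using that w unfolding Ul_def is_ultrafilter_def by blast
  then show ?thesis using w unfolding phi_def by blast
qed

lemma phi_top: "phi {top} = Ul"
  unfolding phi_def using ultra_top by blast


lemma ble_type: "ble type_BA a b \<longleftrightarrow> a \<le> b"
  by (simp add: ble_def type_BA_def inf.absorb_iff1)

lemma ble_pow: "ble (pow_BA U) X Y \<longleftrightarrow> X \<subseteq> Y"
  by (auto simp add: ble_def pow_BA_def)

lemma impT_sub: "imp_T imp U V \<subseteq> Ul"
  by (auto simp: imp_T_def)

lemma mem_impT_D:
  assumes u: "u \<in> imp_T imp U V" and F: "is_filter F" "phi F \<subseteq> U" and v: "v \<in> Ul"
    and D: "Dimp imp u F \<subseteq> v"
  shows "v \<in> V"
proof -
  have "\<forall>Z. Z \<subseteq> U \<longrightarrow> TA_set imp u Z \<subseteq> V" using u by (simp add: imp_T_def)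
  then have "TA_set imp u (phi F) \<subseteq> V" using F(2) by blast
  moreover have "TA imp u (phi F) v" unfolding TA_def using F(1) D by blast
  then have "v \<in> TA_set imp u (phi F)" using v by (simp add: TA_set_def)
  ultimately show ?thesis by blast
qed

lemma mem_impT_I:
  assumes u: "u \<in> Ul" and H: "\<And>F v. is_filter F \<Longrightarrow> phi F \<subseteq> U \<Longrightarrow> v \<in> Ul \<Longrightarrow>
   Dimp imp u F \<subseteq> v \<Longrightarrow> v \<in> V"
  shows "u \<in> imp_T imp U V"
proof -
  have "TA_set imp u Z \<subseteq> V" if Z: "Z \<subseteq> U" for Z
  proof
    fix v assume "v \<in> TA_set imp u Z"
    then have v: "v \<in> Ul" and "TA imp u Z v" by (auto simp: TA_set_def)
    then obtain F where "is_filter F" "Z = phi F" "Dimp imp u F \<subseteq> v" unfolding TA_def by blast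
    then show "v \<in> V" using H Z v by blast
  qed
  then show ?thesis using u by (simp add: imp_T_def)
qed

lemma mem_impT_E:
  assumes u: "u \<in> Ul" and n: "u \<notin> imp_T imp U V"
  shows "\<exists>F v. is_filter F \<and> phi F \<subseteq> U \<and> v \<in> Ul \<and> Dimp imp u F \<subseteq> v \<and> v \<notin> V"
proof (rule ccontr)
  assume "\<not> ?thesis"
  then have "v \<in> V" if "is_filter F" "phi F \<subseteq> U" "v \<in> Ul" "Dimp imp u F \<subseteq> v" for F v
    using that by blast
  then have "u \<in> imp_T imp U V" by (rule mem_impT_I[OF u])
  then show False using n by blast
qed

lemma phi_sub: "phi F \<subseteq> Ul" by (auto simp: phi_def)

locale psb =
  fixes imp :: "'a::boolean_algebra \<Rightarrow> 'a \<Rightarrow> 'a"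
  assumes psb: "PSB type_BA imp"
begin

lemma C1: "imp a top = top" and C2: "inf (imp a b) (imp a c) = imp a (inf b c)"
  and C3: "imp (sup a b) c \<le> inf (imp a c) (imp b c)"
  and C1s: "imp bot a = top" and C3s: "inf (imp a c) (imp b c) \<le> imp (sup a b) c"
  using psb unfolding PSB_def cond_alg_def C1s_def C3s_def ble_type
  by (auto simp: type_BA_def ble_def)

lemma mono: "b \<le> c \<Longrightarrow> imp a b \<le> imp a c"
proof -
  assume "b \<le> c"
  then have "inf b c = b" by (simp add: inf.absorb1)
  then have "imp a b = inf (imp a b) (imp a c)" using C2[of a b c] by simp
  then show ?thesis by (metis inf.cobounded2)
qed

lemma anti: "a \<le> b \<Longrightarrow> imp b c \<le> imp a c"
proof -
  assume "a \<le> b"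
  then have "sup a b = b" by (simp add: sup.absorb2)
  then have "imp b c \<le> inf (imp a c) (imp b c)" using C3[of a b c] by simp
  then show ?thesis by simp
qed

lemma u_mono: "u \<in> Ul \<Longrightarrow> imp a b \<in> u \<Longrightarrow> b \<le> c \<Longrightarrow> imp a c \<in> u"
  using mono ultra_up by blast
lemma u_anti: "u \<in> Ul \<Longrightarrow> imp b c \<in> u \<Longrightarrow> a \<le> b \<Longrightarrow> imp a c \<in> u"
  using anti ultra_up by blast

lemma Dimp_filter:
  assumes u: "u \<in> Ul" and F: "is_filter F" shows "is_filter (Dimp imp u F)"
  unfolding is_filter_def
proof (intro conjI ballI allI impI)
  have "imp top top \<in> u" using C1 ultra_top[OF u] by simp
  then have "\<exists>a\<in>F. imp a top \<in> u" using F filter_top by blast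
  then show "top \<in> Dimp imp u F" by (simp add: Dimp_def)
next
  fix a b assume "a \<in> Dimp imp u F" "a \<le> b"
  then show "b \<in> Dimp imp u F" using u_mono u unfolding Dimp_def by blast
next
  fix b b' assume "b \<in> Dimp imp u F" "b' \<in> Dimp imp u F"
  then obtain a a' where a: "a \<in> F" "imp a b \<in> u" "a' \<in> F" "imp a' b' \<in> u" by (auto simp: Dimp_def)
  have "imp (inf a a') b \<in> u" "imp (inf a a') b' \<in> u" using a u_anti u by auto
  then have "inf (imp (inf a a') b) (imp (inf a a') b') \<in> u" using ultra_inf[OF u] by blast
  then have "imp (inf a a') (inf b b') \<in> u" by (simp add: C2)
  moreover have "inf a a' \<in> F" using a F filter_inf by blast
  ultimately show "inf b b' \<in> Dimp imp u F" by (auto simp: Dimp_def)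
qed

lemma ext_cond: "cond_alg (pow_BA Ul) (imp_T imp)"
  unfolding cond_alg_def ble_pow
  by (auto simp: pow_BA_def impT_sub) (auto simp: imp_T_def TA_set_def)

lemma ext_C1s_aux: "imp_T imp {} V = Ul"
  proof
    show "imp_T imp {} V \<subseteq> Ul" by (rule impT_sub)
  next
    show "Ul \<subseteq> imp_T imp {} V"
    proof
      fix u :: "'a set" assume u: "u \<in> Ul"
      have "v \<in> V" if F: "is_filter F" "phi F \<subseteq> {}" "v \<in> Ul" "Dimp imp u F \<subseteq> v" for F v
      proof -
        have "F = UNIV"
        proof (rule ccontr)
          assume "F \<noteq> UNIV"
          then obtain w where "w \<in> Ul" "F \<subseteq> w" using ext_ultra_proper F by blast
          then show False using F unfolding phi_def by blast
        qed
        moreover have "imp bot bot \<in> u" using C1s ultra_top u by simp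
        ultimately have "bot \<in> Dimp imp u F" unfolding Dimp_def by blast
        then show ?thesis using that ultra_bot by blast
      qed
      then show "u \<in> imp_T imp {} V" by (intro mem_impT_I[OF u])
    qed
  qed

lemma ext_C1s: "C1s (pow_BA Ul) (imp_T imp)"
  by (simp add: C1s_def pow_BA_def ext_C1s_aux)

lemma ext_C3s_aux: "imp_T imp U W \<inter> imp_T imp U' W \<subseteq> imp_T imp (U \<union> U') W"
proof
  fix u assume uu: "u \<in> imp_T imp U W \<inter> imp_T imp U' W"
  have u: "u \<in> Ul" using uu impT_sub by blast
  have "v \<in> W" if F: "is_filter F" "phi F \<subseteq> U \<union> U'" and v: "v \<in> Ul" "Dimp imp u F \<subseteq> v" for F v
  proof -
    define I where "I = {a. \<exists>b. b \<notin> v \<and> imp a b \<in> u}"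
    have "imp bot bot \<in> u" using C1s ultra_top[OF u] by simp
    moreover have "bot \<notin> v" using ultra_bot v(1) by blast
    ultimately have I0: "bot \<in> I" unfolding I_def by blast
    have Id: "b \<in> I" if "a \<in> I" "b \<le> a" for a b using that u_anti u unfolding I_def by blast
    have Is: "sup a b \<in> I" if ha: "a \<in> I" and hb: "b \<in> I" for a b
    proof -
      obtain c d where cd: "c \<notin> v" "imp a c \<in> u" "d \<notin> v" "imp b d \<in> u" using ha hb unfolding I_def by blast
      have "imp a (sup c d) \<in> u" using u_mono[OF u cd(2)] by simp
      moreover have "imp b (sup c d) \<in> u" using u_mono[OF u cd(4)] by simp
      moreover have "sup c d \<notin> v" using ultra_sup[OF v(1)] cd(1,3) by simp
      ultimately have "imp a (sup c d) \<in> u" "imp b (sup c d) \<in> u" "sup c d \<notin> v" by auto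
      then have "inf (imp a (sup c d)) (imp b (sup c d)) \<in> u" using ultra_inf[OF u] by blast
      then have "imp (sup a b) (sup c d) \<in> u" using C3s ultra_up[OF u] by blast
      then show ?thesis using \<open>sup c d \<notin> v\<close> I_def by blast
    qed
    have disj: "F \<inter> I = {}" using v unfolding I_def Dimp_def by blast
    have "\<exists>w\<in>Ul. F \<subseteq> w \<and> w \<inter> I = {}"
    proof (rule ext_ultra[OF F(1) I0])
      show "b \<in> I" if "a \<in> I" "b \<le> a" for a b using Id that by blast
      show "sup a b \<in> I" if "a \<in> I" "b \<in> I" for a b using Is that by blast
      show "F \<inter> I = {}" by (rule disj)
    qed
    then obtain w where w: "w \<in> Ul" "F \<subseteq> w" "w \<inter> I = {}" by blast
    have wU: "w \<in> U \<union> U'" using w F unfolding phi_def by blast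
    have Dw: "Dimp imp u w \<subseteq> v" using w unfolding Dimp_def I_def by blast
    have pw: "phi w = {w}" "is_filter w" using phi_single ultra_filter w by auto
    show ?thesis
    proof (cases "w \<in> U")
      case True then have "phi w \<subseteq> U" using pw by simp
      then show ?thesis using uu mem_impT_D pw Dw v by blast
    next
      case False then have "w \<in> U'" using wU by blast
      then have "phi w \<subseteq> U'" using pw by simp
      then show ?thesis using uu mem_impT_D pw Dw v by blast
    qed
  qed
  then show "u \<in> imp_T imp (U \<union> U') W" by (intro mem_impT_I[OF u])
qed

lemma ext_C3s: "C3s (pow_BA Ul) (imp_T imp)"
  unfolding C3s_def ble_pow by (simp add: pow_BA_def ext_C3s_aux)

lemma ext_PSB: "PSB (pow_BA Ul) (imp_T imp)"
  using ext_cond ext_C1s ext_C3s PSB_def by blast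

end


context psb
begin

lemma ext_C5:
  assumes "C5 type_BA imp" shows "C5 (pow_BA Ul) (imp_T imp)"
proof -
  have c5: "inf a (imp a b) \<le> b" for a b using assms unfolding C5_def ble_type by (simp add: type_BA_def)
  have "U \<inter> imp_T imp U V \<subseteq> V" if "U \<subseteq> Ul" for U V
  proof
    fix u assume uu: "u \<in> U \<inter> imp_T imp U V"
    then have u: "u \<in> Ul" using impT_sub by blast
    have "Dimp imp u u \<subseteq> u"
    proof
      fix b assume "b \<in> Dimp imp u u"
      then obtain a where "a \<in> u" "imp a b \<in> u" by (auto simp: Dimp_def)
      then have "inf a (imp a b) \<in> u" using ultra_inf[OF u] by blast
      then show "b \<in> u" using c5 ultra_up[OF u] by blast
    qed
    moreover have "phi u \<subseteq> U" using phi_single[OF u] uu by simp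
    ultimately show "u \<in> V" using uu mem_impT_D[where u=u and U=U and V=V and F=u and v=u] ultra_filter[OF u] u by blast
  qed
  then show ?thesis unfolding C5_def ble_pow by (simp add: pow_BA_def)
qed

lemma ext_C4:
  assumes "C4 type_BA imp" shows "C4 (pow_BA Ul) (imp_T imp)"
proof -
  have c4: "imp a b \<le> imp c (imp a b)" for a b c using assms unfolding C4_def ble_type by (simp add: type_BA_def)
  have "imp_T imp U V \<subseteq> imp_T imp W (imp_T imp U V)" for U V W
  proof
    fix u assume uu: "u \<in> imp_T imp U V"
    then have u: "u \<in> Ul" using impT_sub by blast
    have "v \<in> imp_T imp U V" if F: "is_filter F" "phi F \<subseteq> W" and v: "v \<in> Ul" "Dimp imp u F \<subseteq> v" for F v
    proof -
      have "w \<in> V" if F': "is_filter F'" "phi F' \<subseteq> U" and w: "w \<in> Ul" "Dimp imp v F' \<subseteq> w" for F' w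
      proof -
        have "Dimp imp u F' \<subseteq> w"
        proof
          fix b assume "b \<in> Dimp imp u F'"
          then obtain a where a: "a \<in> F'" "imp a b \<in> u" by (auto simp: Dimp_def)
          then have "imp top (imp a b) \<in> u" using c4 ultra_up u by blast
          then have "imp a b \<in> Dimp imp u F" using filter_top F by (auto simp: Dimp_def)
          then have "imp a b \<in> v" using v by blast
          then show "b \<in> w" using a w by (auto simp: Dimp_def)
        qed
        then show ?thesis using mem_impT_D[OF uu F' w(1)] by blast
      qed
      then show ?thesis by (intro mem_impT_I[OF v(1)])
    qed
    then show "u \<in> imp_T imp W (imp_T imp U V)" by (intro mem_impT_I[OF u])
  qed
  then show ?thesis unfolding C4_def ble_pow by (simp add: pow_BA_def)
qed

lemma ext_C7:
  assumes "C7 type_BA imp" shows "C7 (pow_BA Ul) (imp_T imp)"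
proof -
  have c7: "- imp a b \<le> imp c (- imp a b)" for a b c using assms unfolding C7_def ble_type by (simp add: type_BA_def)
  have "Ul - imp_T imp U V \<subseteq> imp_T imp W (Ul - imp_T imp U V)" for U V W
  proof
    fix u assume uu: "u \<in> Ul - imp_T imp U V"
    then have u: "u \<in> Ul" by blast
    obtain F' w where F': "is_filter F'" "phi F' \<subseteq> U" and w: "w \<in> Ul" "Dimp imp u F' \<subseteq> w" "w \<notin> V"
      using mem_impT_E[OF u] uu by blast
    have "v \<in> Ul - imp_T imp U V" if F: "is_filter F" "phi F \<subseteq> W" and v: "v \<in> Ul" "Dimp imp u F \<subseteq> v" for F v
    proof -
      have "Dimp imp v F' \<subseteq> w"
      proof
        fix b assume "b \<in> Dimp imp v F'"
        then obtain a where a: "a \<in> F'" "imp a b \<in> v" by (auto simp: Dimp_def)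
        have "imp a b \<in> u"
        proof (rule ccontr)
          assume "imp a b \<notin> u"
          then have "- imp a b \<in> u" using ultra_compl u by blast
          then have "imp top (- imp a b) \<in> u" using c7 ultra_up u by blast
          then have "- imp a b \<in> Dimp imp u F" using filter_top F by (auto simp: Dimp_def)
          then have "- imp a b \<in> v" using v by blast
          then show False using a ultra_compl v by blast
        qed
        then show "b \<in> w" using a w by (auto simp: Dimp_def)
      qed
      then show ?thesis using v mem_impT_D[OF _ F' w(1)] w(3) by blast
    qed
    then show "u \<in> imp_T imp W (Ul - imp_T imp U V)" by (intro mem_impT_I[OF u])
  qed
  then show ?thesis unfolding C7_def ble_pow by (simp add: pow_BA_def)
qed

lemma ext_C6:
  assumes "C6 type_BA imp" shows "C6 (pow_BA Ul) (imp_T imp)"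
proof -
  have c6: "imp a b \<le> imp (- b) (- a)" for a b using assms unfolding C6_def ble_type by (simp add: type_BA_def)
  have "imp_T imp U V \<subseteq> imp_T imp (Ul - V) (Ul - U)" for U V
  proof
    fix u assume uu: "u \<in> imp_T imp U V"
    then have u: "u \<in> Ul" using impT_sub by blast
    have "v \<in> Ul - U" if F: "is_filter F" "phi F \<subseteq> Ul - V" and v: "v \<in> Ul" "Dimp imp u F \<subseteq> v" for F v
    proof (rule ccontr)
      assume "v \<notin> Ul - U"
      then have vU: "v \<in> U" using v by blast
      let ?G = "gen F (Dimp imp u v)"
      have Df: "is_filter (Dimp imp u v)" using Dimp_filter u ultra_filter v by blast
      have Gf: "is_filter ?G" using gen_filter F Df by blast
      have "?G \<noteq> UNIV"
      proof
        assume "?G = UNIV"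
        then have "bot \<in> ?G" by blast
        then obtain a b where ab: "a \<in> F" "b \<in> Dimp imp u v" "inf a b \<le> bot" unfolding gen_def by blast
        then obtain c where c: "c \<in> v" "imp c b \<in> u" by (auto simp: Dimp_def)
        have "inf b a = bot" using ab(3) by (simp add: bot_unique inf_commute)
        then have "b \<le> - a" by (simp add: inf_shunt)
        then have "imp c (- a) \<in> u" using c u_mono u by blast
        then have "imp (- (- a)) (- c) \<in> u" using c6 ultra_up u by blast
        then have "imp a (- c) \<in> u" by simp
        then have "- c \<in> Dimp imp u F" using ab by (auto simp: Dimp_def)
        then show False using v c ultra_compl by blast
      qed
      then obtain w where w: "w \<in> Ul" "?G \<subseteq> w" using ext_ultra_proper Gf by blast
      have "w \<in> phi F" using w gen_sub1[OF Df, of F] unfolding phi_def by blast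
      then have wV: "w \<notin> V" using F by blast
      have "Dimp imp u v \<subseteq> w" using w gen_sub2[OF F(1)] by blast
      moreover have "phi v \<subseteq> U" using phi_single[OF v(1)] vU by simp
      ultimately have "w \<in> V" using mem_impT_D[OF uu ultra_filter[OF v(1)]] w(1) by blast
      then show False using wV by blast
    qed
    then show "u \<in> imp_T imp (Ul - V) (Ul - U)" by (intro mem_impT_I[OF u])
  qed
  then show ?thesis unfolding C6_def ble_pow by (simp add: pow_BA_def)
qed

lemma ext_C8:
  assumes "C8 type_BA imp" shows "C8 (pow_BA Ul) (imp_T imp)"
proof -
  have c8: "inf (imp top (sup (- a) b)) (imp b c) \<le> imp a c" for a b c
    using assms unfolding C8_def ble_type by (simp add: type_BA_def)
  have "imp_T imp Ul (Ul - U \<union> V) \<inter> imp_T imp V W \<subseteq> imp_T imp U W" for U V W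
  proof
    fix u assume uu: "u \<in> imp_T imp Ul (Ul - U \<union> V) \<inter> imp_T imp V W"
    then have u: "u \<in> Ul" using impT_sub by blast
    have "v \<in> W" if F: "is_filter F" "phi F \<subseteq> U" and v: "v \<in> Ul" "Dimp imp u F \<subseteq> v" for F v
    proof -
      let ?D = "Dimp imp u {top}"
      let ?G = "gen F ?D"
      have Df: "is_filter ?D" using Dimp_filter u top_filter by blast
      have Gf: "is_filter ?G" using gen_filter F Df by blast
      have "phi ?G \<subseteq> V"
      proof
        fix w assume "w \<in> phi ?G"
        then have w: "w \<in> Ul" "?G \<subseteq> w" unfolding phi_def by auto
        then have "w \<in> U" using gen_sub1[OF Df, of F] F unfolding phi_def by blast
        moreover have "?D \<subseteq> w" using w gen_sub2[OF F(1)] by blast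
        then have "w \<in> Ul - U \<union> V" using mem_impT_D[where u=u and U=Ul and V="Ul - U \<union> V" and F="{top}" and v=w] uu top_filter phi_top w by blast
        ultimately show "w \<in> V" by blast
      qed
      moreover have "Dimp imp u ?G \<subseteq> v"
      proof
        fix c assume "c \<in> Dimp imp u ?G"
        then obtain g where g: "g \<in> ?G" "imp g c \<in> u" by (auto simp: Dimp_def)
        then obtain f d where fd: "f \<in> F" "d \<in> ?D" "inf f d \<le> g" unfolding gen_def by blast
        have "imp top d \<in> u" using fd(2) by (auto simp: Dimp_def)
        moreover have "d \<le> sup (- f) (inf f d)" by (simp add: sup_inf_distrib1)
        ultimately have "imp top (sup (- f) (inf f d)) \<in> u" using u_mono u by blast
        moreover have "imp (inf f d) c \<in> u" using g fd u_anti u by blast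
        ultimately have "inf (imp top (sup (- f) (inf f d))) (imp (inf f d) c) \<in> u" using ultra_inf[OF u] by blast
        then have "imp f c \<in> u" using c8 ultra_up[OF u] by blast
        then show "c \<in> v" using fd v by (auto simp: Dimp_def)
      qed
      ultimately show ?thesis using uu mem_impT_D[where u=u and U=V and V=W and F="?G" and v=v] Gf v by blast
    qed
    then show "u \<in> imp_T imp U W" by (intro mem_impT_I[OF u])
  qed
  then show ?thesis unfolding C8_def ble_pow by (simp add: pow_BA_def)
qed

end

theorem corollary9p10:
  fixes imp :: "'a::boolean_algebra \<Rightarrow> 'a \<Rightarrow> 'a"
  shows "(PSB type_BA imp \<longrightarrow> PSB (pow_BA Ul) (imp_T imp)) \<and>
         (PsC type_BA imp \<longrightarrow> PsC (pow_BA Ul) (imp_T imp)) \<and>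
         (SIA type_BA imp \<longrightarrow> SIA (pow_BA Ul) (imp_T imp)) \<and>
         (S2IA type_BA imp \<longrightarrow> S2IA (pow_BA Ul) (imp_T imp))"
proof (intro conjI impI)
  assume "PSB type_BA imp"
  then interpret psb imp by (rule psb.intro)
  show "PSB (pow_BA Ul) (imp_T imp)" by (rule ext_PSB)
next
  assume h: "PsC type_BA imp"
  then interpret psb imp by (simp add: psb_def PsC_def)
  show "PsC (pow_BA Ul) (imp_T imp)" using h ext_PSB ext_C5 ext_C6 by (simp add: PsC_def)
next
  assume h: "SIA type_BA imp"
  then interpret psb imp by (simp add: psb_def SIA_def)
  show "SIA (pow_BA Ul) (imp_T imp)" using h ext_PSB ext_C4 ext_C5 ext_C7 ext_C8 by (simp add: SIA_def)
next
  assume h: "S2IA type_BA imp"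
  then interpret psb imp by (simp add: psb_def S2IA_def)
  show "S2IA (pow_BA Ul) (imp_T imp)" using h ext_PSB ext_C4 ext_C5 ext_C6 ext_C7 by (simp add: S2IA_def)
qed

end
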